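(* Let $P\subseteq\mathbb{R}^2$ be a nonempty closed convex set such that $\tau P=P^{\circ}$. Then either $P$ is a line through the origin, or $P$ is bounded and full-dimensional.
   Context: $\tau:\mathbb{R}^2\to\mathbb{R}^2$ denotes the $90^\circ$ counterclockwise rotation. The polar of $P$ is $P^{\circ}=\{x\in\mathbb{R}^2: y^\top x\le 1\text{ for all }y\in P\}$. *)

theory Defs
  imports "HOL-Analysis.Analysis"
begin

definition rot90 :: "real^2 \<Rightarrow> real^2" where
  "rot90 x = (\<chi> i. if i = 1 then - (x $ 2) else x $ 1)"

definition polar :: "(real^2) set \<Rightarrow> (real^2) set" where
  "polar P = {x. \<forall>y\<in>P. y \<bullet> x \<le> 1}"

end

theory Submission
  imports Defs
begin

definition dt :: "real^2 \<Rightarrow> real^2 \<Rightarrow> real" where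
  "dt x y = x$1 * y$2 - x$2 * y$1"

lemma inner_rot: "y \<bullet> rot90 x = dt x y"
  by (simp add: inner_vec_def sum_2 rot90_def dt_def algebra_simps)

lemma rot_inj: "rot90 x = rot90 y \<Longrightarrow> x = y"
  by (auto simp: rot90_def vec_eq_iff forall_2)

lemma rot_scale: "rot90 (t *\<^sub>R x) = t *\<^sub>R rot90 x"
  by (auto simp: rot90_def vec_eq_iff forall_2)

lemma dt_scale: "dt (t *\<^sub>R v) y = t * dt v y"
  by (simp add: dt_def algebra_simps)

lemma dt_anti: "dt y x = - dt x y"
  by (simp add: dt_def algebra_simps)

theorem proposition2:
  fixes P :: "(real^2) set"
  assumes "P \<noteq> {}" and "closed P" and "convex P"
    and "rot90 ` P = polar P"
  shows "(\<exists>v. v \<noteq> 0 \<and> P = range (\<lambda>t::real. t *\<^sub>R v))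
         \<or> (bounded P \<and> aff_dim P = 2)"
proof -
  have pol: "x \<in> polar P \<longleftrightarrow> (\<forall>y\<in>P. y \<bullet> x \<le> 1)" for x
    by (simp add: polar_def)
  have dle: "dt x y \<le> 1" if "x \<in> P" "y \<in> P" for x y
  proof -
    have "rot90 x \<in> polar P" using assms(4) that(1) by blast
    then show ?thesis using that(2) by (auto simp: pol inner_rot)
  qed
  have "0 \<in> polar P" by (simp add: pol)
  then obtain z where z: "z \<in> P" "rot90 z = 0" using assms(4) by (metis imageE)
  have "rot90 z = rot90 0" using z by (simp add: rot90_def vec_eq_iff forall_2)
  then have zero: "0 \<in> P" using z rot_inj by metis
  show ?thesis
  proof (cases "\<exists>a\<in>P. \<exists>b\<in>P. dt a b \<noteq> 0")
    case True
    then obtain a b where ab: "a \<in> P" "b \<in> P" "dt a b \<noteq> 0" by blast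
    define D where "D = dt a b"
    have bnd: "bounded P"
    proof -
      have "norm y \<le> (\<bar>a$1\<bar> + \<bar>b$1\<bar> + \<bar>a$2\<bar> + \<bar>b$2\<bar>) / \<bar>D\<bar>" if y: "y \<in> P" for y
      proof -
        have d1: "\<bar>dt a y\<bar> \<le> 1" using dle[OF ab(1) y] dle[OF y ab(1)] dt_anti[of y a] by linarith
        have d2: "\<bar>dt y b\<bar> \<le> 1" using dle[OF ab(2) y] dle[OF y ab(2)] dt_anti[of y b] by linarith
        have e1: "D * y$1 = dt y b * a$1 + dt a y * b$1" by (simp add: D_def dt_def algebra_simps)
        have e2: "D * y$2 = dt y b * a$2 + dt a y * b$2" by (simp add: D_def dt_def algebra_simps)
        have "\<bar>D\<bar> * \<bar>y$1\<bar> \<le> \<bar>a$1\<bar> + \<bar>b$1\<bar>"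
        proof -
          have "\<bar>D\<bar> * \<bar>y$1\<bar> = \<bar>dt y b * a$1 + dt a y * b$1\<bar>" by (metis e1 abs_mult)
          also have "\<dots> \<le> \<bar>dt y b\<bar> * \<bar>a$1\<bar> + \<bar>dt a y\<bar> * \<bar>b$1\<bar>" by (metis abs_triangle_ineq abs_mult)
          also have "\<dots> \<le> \<bar>a$1\<bar> + \<bar>b$1\<bar>"
            using d1 d2 by (intro add_mono) (auto intro: mult_left_le_one_le)
          finally show ?thesis .
        qed
        moreover have "\<bar>D\<bar> * \<bar>y$2\<bar> \<le> \<bar>a$2\<bar> + \<bar>b$2\<bar>"
        proof -
          have "\<bar>D\<bar> * \<bar>y$2\<bar> = \<bar>dt y b * a$2 + dt a y * b$2\<bar>" by (metis e2 abs_mult)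
          also have "\<dots> \<le> \<bar>dt y b\<bar> * \<bar>a$2\<bar> + \<bar>dt a y\<bar> * \<bar>b$2\<bar>" by (metis abs_triangle_ineq abs_mult)
          also have "\<dots> \<le> \<bar>a$2\<bar> + \<bar>b$2\<bar>"
            using d1 d2 by (intro add_mono) (auto intro: mult_left_le_one_le)
          finally show ?thesis .
        qed
        ultimately have "\<bar>D\<bar> * (\<bar>y$1\<bar> + \<bar>y$2\<bar>) \<le> \<bar>a$1\<bar> + \<bar>b$1\<bar> + \<bar>a$2\<bar> + \<bar>b$2\<bar>"
          by (simp add: distrib_left)
        moreover have "\<bar>D\<bar> > 0" using ab(3) D_def by simp
        ultimately have "\<bar>y$1\<bar> + \<bar>y$2\<bar> \<le> (\<bar>a$1\<bar> + \<bar>b$1\<bar> + \<bar>a$2\<bar> + \<bar>b$2\<bar>) / \<bar>D\<bar>"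
          by (simp add: field_simps)
        moreover have "norm y \<le> \<bar>y$1\<bar> + \<bar>y$2\<bar>" using norm_le_l1_cart[of y] by (simp add: sum_2)
        ultimately show ?thesis by linarith
      qed
      then show ?thesis unfolding bounded_iff by blast
    qed
    have "aff_dim P = int (dim P)"
      using aff_dim_eq_dim[of 0 P] zero hull_subset[of P affine] by auto
    moreover have "dim P \<ge> 2"
    proof -
      have ne: "a \<noteq> b" using ab(3) by (auto simp: dt_def)
      have "a \<notin> span {b}"
      proof
        assume "a \<in> span {b}"
        then obtain k where "a = k *\<^sub>R b" by (auto simp: span_singleton)
        then show False using ab(3) by (simp add: dt_def)
      qed
      moreover have "b \<noteq> 0" using ab(3) by (auto simp: dt_def)
      ultimately have "independent {a, b}" using ne by (simp add: independent_insert)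
      then have "card {a,b} \<le> dim P"
        using ab by (intro independent_card_le_dim) auto
      then show ?thesis using ne by simp
    qed
    moreover have "aff_dim P \<le> 2" using aff_dim_le_DIM[of P] by simp
    ultimately show ?thesis using bnd by simp
  next
    case False
    then have d0: "dt a b = 0" if "a \<in> P" "b \<in> P" for a b using that by blast
    show ?thesis
    proof (cases "\<exists>v\<in>P. v \<noteq> 0")
      case True
      then obtain v where v: "v \<in> P" "v \<noteq> 0" by blast
      have "P = range (\<lambda>t::real. t *\<^sub>R v)"
      proof
        show "P \<subseteq> range (\<lambda>t::real. t *\<^sub>R v)"
        proof
          fix y assume y: "y \<in> P"
          have e: "v$1 * y$2 = v$2 * y$1" using d0[OF v(1) y] by (simp add: dt_def)
          show "y \<in> range (\<lambda>t::real. t *\<^sub>R v)"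
          proof (cases "v$1 = 0")
            case True
            then have "v$2 \<noteq> 0" using v(2) by (auto simp: vec_eq_iff forall_2)
            then have "y = (y$2 / v$2) *\<^sub>R v" using e True
              by (auto simp: vec_eq_iff forall_2 field_simps)
            then show ?thesis by blast
          next
            case False
            then have "y = (y$1 / v$1) *\<^sub>R v" using e
              by (auto simp: vec_eq_iff forall_2 field_simps)
            then show ?thesis by blast
          qed
        qed
      next
        show "range (\<lambda>t::real. t *\<^sub>R v) \<subseteq> P"
        proof
          fix x assume "x \<in> range (\<lambda>t::real. t *\<^sub>R v)"
          then obtain t where t: "x = t *\<^sub>R v" by blast
          have "rot90 x \<in> polar P"
            unfolding pol inner_rot t dt_scale using d0[OF v(1)] by simp
          then obtain w where "w \<in> P" "rot90 w = rot90 x" using assms(4) by (metis imageE)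
          then show "x \<in> P" using rot_inj by metis
        qed
      qed
      then show ?thesis using v by blast
    next
      case False
      then have "P = {0}" using zero by auto
      moreover have "(\<chi> i. 1) \<in> polar P" using \<open>P = {0}\<close> by (simp add: polar_def)
      ultimately have "(\<chi> i. 1) \<in> rot90 ` {0::real^2}" using assms(4) by simp
      then show ?thesis by (simp add: rot90_def vec_eq_iff forall_2)
    qed
  qed
qed

end
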